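(* Let $\mathbb K$ be a field with $2\in\mathbb K^\times$, $A$ a unital commutative associative $\mathbb K$-algebra, $\mathfrak k$ a $\mathbb K$-Lie algebra, $\mathfrak g=A\otimes\mathfrak k$ and $\mathfrak z$ a vector space. A linear map $f=f_1\circ p_1+f_2\circ p_2+f_3\circ p_3:\Lambda^2(\mathfrak g)\to\mathfrak z$ is a 2-cocycle if and only if both $f_1\circ p_1+f_2\circ p_2$ and $f_3\circ p_3$ are 2-cocycles.
   Context: $\mathfrak g$ has bracket $[a\otimes x,a'\otimes x']=aa'\otimes[x,x']$, $ax=a\otimes x$, unit $\mathbf 1$. $v\wedge w=\tfrac12(v\otimes w-w\otimes v)$, $v\vee w=\tfrac12(v\otimes w+w\otimes v)$. $I_A$ is the kernel of multiplication $S^2(A)\to A$. $p_1(ax\wedge by)=a\wedge b\otimes x\vee y\in\Lambda^2(A)\otimes S^2(\mathfrak k)$, $p_2(ax\wedge by)=ab\otimes x\wedge y\in A\otimes\Lambda^2(\mathfrak k)$, $p_3(ax\wedge by)=(a\vee b-ab\vee\mathbf 1)\otimes x\wedge y\in I_A\otimes\Lambda^2(\mathfrak k)$; together they form a linear isomorphism of $\Lambda^2(\mathfrak g)$ onto the direct sum, and $f_1,f_2,f_3$ are arbitrary linear maps on these three spaces. A 2-cocycle is a linear map on $\Lambda^2(\mathfrak g)$ vanishing on the span of $[u,v]\wedge w+[v,w]\wedge u+[w,u]\wedge v$, $u,v,w\in\mathfrak g$. *)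

theory Defs
  imports Complex_Main
begin

text \<open>Tensor products, exterior and symmetric squares
  are not available in the library; linear maps out of them are encoded by their
  universal properties as multilinear maps.\<close>

definition unital_comm_alg ::
  "('K::field \<Rightarrow> 'A::ab_group_add \<Rightarrow> 'A) \<Rightarrow> ('A \<Rightarrow> 'A \<Rightarrow> 'A) \<Rightarrow> 'A \<Rightarrow> bool" where
  "unital_comm_alg sA mul one \<longleftrightarrow>
     vector_space sA
   \<and> (\<forall>a. Vector_Spaces.linear sA sA (mul a))
   \<and> (\<forall>a b c. mul (mul a b) c = mul a (mul b c))
   \<and> (\<forall>a b. mul a b = mul b a)
   \<and> (\<forall>a. mul one a = a)"

definition lie_alg ::
  "('K::field \<Rightarrow> 'k::ab_group_add \<Rightarrow> 'k) \<Rightarrow> ('k \<Rightarrow> 'k \<Rightarrow> 'k) \<Rightarrow> bool" where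
  "lie_alg sk br \<longleftrightarrow>
     vector_space sk
   \<and> (\<forall>x. Vector_Spaces.linear sk sk (br x))
   \<and> (\<forall>x. Vector_Spaces.linear sk sk (\<lambda>y. br y x))
   \<and> (\<forall>x. br x x = 0)
   \<and> (\<forall>x y z. br x (br y z) + br y (br z x) + br z (br x y) = 0)"

definition multilinear3 ::
  "('K::field \<Rightarrow> 'a::ab_group_add \<Rightarrow> 'a) \<Rightarrow> ('K \<Rightarrow> 'b::ab_group_add \<Rightarrow> 'b) \<Rightarrow>
   ('K \<Rightarrow> 'c::ab_group_add \<Rightarrow> 'c) \<Rightarrow> ('K \<Rightarrow> 'z::ab_group_add \<Rightarrow> 'z) \<Rightarrow>
   ('a \<Rightarrow> 'b \<Rightarrow> 'c \<Rightarrow> 'z) \<Rightarrow> bool" where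
  "multilinear3 s1 s2 s3 sz F \<longleftrightarrow>
     (\<forall>y w. Vector_Spaces.linear s1 sz (\<lambda>x. F x y w))
   \<and> (\<forall>x w. Vector_Spaces.linear s2 sz (\<lambda>y. F x y w))
   \<and> (\<forall>x y. Vector_Spaces.linear s3 sz (\<lambda>w. F x y w))"

definition multilinear4 ::
  "('K::field \<Rightarrow> 'a::ab_group_add \<Rightarrow> 'a) \<Rightarrow> ('K \<Rightarrow> 'b::ab_group_add \<Rightarrow> 'b) \<Rightarrow>
   ('K \<Rightarrow> 'c::ab_group_add \<Rightarrow> 'c) \<Rightarrow> ('K \<Rightarrow> 'd::ab_group_add \<Rightarrow> 'd) \<Rightarrow>
   ('K \<Rightarrow> 'z::ab_group_add \<Rightarrow> 'z) \<Rightarrow> ('a \<Rightarrow> 'b \<Rightarrow> 'c \<Rightarrow> 'd \<Rightarrow> 'z) \<Rightarrow> bool" where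
  "multilinear4 s1 s2 s3 s4 sz F \<longleftrightarrow>
     (\<forall>y w v. Vector_Spaces.linear s1 sz (\<lambda>x. F x y w v))
   \<and> (\<forall>x w v. Vector_Spaces.linear s2 sz (\<lambda>y. F x y w v))
   \<and> (\<forall>x y v. Vector_Spaces.linear s3 sz (\<lambda>w. F x y w v))
   \<and> (\<forall>x y w. Vector_Spaces.linear s4 sz (\<lambda>v. F x y w v))"

text \<open>A linear map f on Lambda^2(A \<otimes> k) is encoded by
  Phi a x b y = f((a \<otimes> x) \<wedge> (b \<otimes> y)).
  f_1 on Lambda^2(A) \<otimes> S^2(k) is encoded by F1 a b x y = f_1(a \<wedge> b \<otimes> x \<or> y);
  f_2 on A \<otimes> Lambda^2(k) by F2 c x y = f_2(c \<otimes> x \<wedge> y);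
  f_3 on I_A \<otimes> Lambda^2(k) (extended to S^2(A) \<otimes> Lambda^2(k)) by
  F3 a b x y = f_3(a \<or> b \<otimes> x \<wedge> y).\<close>

definition comp_p1 :: "('A \<Rightarrow> 'A \<Rightarrow> 'k \<Rightarrow> 'k \<Rightarrow> 'z) \<Rightarrow> 'A \<Rightarrow> 'k \<Rightarrow> 'A \<Rightarrow> 'k \<Rightarrow> 'z" where
  "comp_p1 F1 = (\<lambda>a x b y. F1 a b x y)"

definition comp_p2 :: "('A \<Rightarrow> 'A \<Rightarrow> 'A) \<Rightarrow> ('A \<Rightarrow> 'k \<Rightarrow> 'k \<Rightarrow> 'z) \<Rightarrow> 'A \<Rightarrow> 'k \<Rightarrow> 'A \<Rightarrow> 'k \<Rightarrow> 'z" where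
  "comp_p2 mul F2 = (\<lambda>a x b y. F2 (mul a b) x y)"

definition comp_p3 :: "('A \<Rightarrow> 'A \<Rightarrow> 'A) \<Rightarrow> 'A \<Rightarrow> ('A \<Rightarrow> 'A \<Rightarrow> 'k \<Rightarrow> 'k \<Rightarrow> 'z::ab_group_add)
    \<Rightarrow> 'A \<Rightarrow> 'k \<Rightarrow> 'A \<Rightarrow> 'k \<Rightarrow> 'z" where
  "comp_p3 mul one F3 = (\<lambda>a x b y. F3 a b x y - F3 (mul a b) one x y)"

text \<open>2-cocycle condition for Phi, with bracket [a x, a' x'] = a a' \<otimes> [x, x'],
  tested on pure tensors u = a x, v = a' x', w = a'' x''.\<close>
definition cocycle2 :: "('A \<Rightarrow> 'A \<Rightarrow> 'A) \<Rightarrow> ('k \<Rightarrow> 'k \<Rightarrow> 'k) \<Rightarrow>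
    ('A \<Rightarrow> 'k \<Rightarrow> 'A \<Rightarrow> 'k \<Rightarrow> 'z::ab_group_add) \<Rightarrow> bool" where
  "cocycle2 mul br Phi \<longleftrightarrow>
    (\<forall>a a' a'' x x' x''.
       Phi (mul a a') (br x x') a'' x'' + Phi (mul a' a'') (br x' x'') a x
     + Phi (mul a'' a) (br x'' x) a' x' = 0)"

end

theory Submission
  imports Defs
begin

lemma lin_neg: assumes "Vector_Spaces.linear s1 s2 f" shows "f (- x) = - f x"
proof -
  have "module_hom s1 s2 f" using assms by (simp add: Vector_Spaces.linear_def)
  thus ?thesis by (rule module_hom.neg)
qed

lemma lin_add: assumes "Vector_Spaces.linear s1 s2 f" shows "f (x + y) = f x + f y"
proof -
  have "module_hom s1 s2 f" using assms by (simp add: Vector_Spaces.linear_def)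
  thus ?thesis by (rule module_hom.add)
qed

lemma half_zero:
  fixes s :: "'K::field \<Rightarrow> 'z::ab_group_add \<Rightarrow> 'z" and v :: 'z
  assumes "vector_space s" "(2::'K) \<noteq> 0" "v + v = 0"
  shows "v = 0"
proof -
  interpret vector_space s by fact
  have "s 2 v = v + v" using scale_left_distrib[of 1 1 v] by simp
  hence "s 2 v = 0" using assms(3) by simp
  thus ?thesis using assms(2) by auto
qed

lemma comb4:
  fixes g1 g2 g3 h1 h2 h3 n1 n2 n3 M :: "'z::ab_group_add"
  assumes "g3+g2+h3-h2+n1+M = 0"
    and "-g2-g3-h2+h3-n1-M = 0"
    and "g1+g3+h1-h3+n2+M = 0"
    and "-g3-g1-h3+h1-n2-M = 0"
    and "g2+g1+h2-h1+n3+M = 0"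
    and "-g1-g2-h1+h2-n3-M = 0"
    and "n1+n2-n3+M = 0"
  shows "(g3+g3)+(g3+g3) = 0"
proof -
  have "(g3+g3)+(g3+g3) = (g3+g2+h3-h2+n1+M) - (-g2-g3-h2+h3-n1-M) + (g1+g3+h1-h3+n2+M)
     - (-g3-g1-h3+h1-n2-M) - (g2+g1+h2-h1+n3+M) + (-g1-g2-h1+h2-n3-M) - (n1+n2-n3+M) - (n1+n2-n3+M)"
    by (simp add: algebra_simps)
  also have "\<dots> = 0" using assms by simp
  finally show ?thesis .
qed

lemma cocycle_add:
  fixes f g :: "'A \<Rightarrow> 'k \<Rightarrow> 'A \<Rightarrow> 'k \<Rightarrow> 'z::ab_group_add"
  assumes "cocycle2 mul br f" "cocycle2 mul br g"
  shows "cocycle2 mul br (\<lambda>a x b y. f a x b y + g a x b y)"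
  unfolding cocycle2_def
proof (intro allI)
  fix a a' a'' x x' x''
  have "f (mul a a') (br x x') a'' x'' + g (mul a a') (br x x') a'' x'' +
    (f (mul a' a'') (br x' x'') a x + g (mul a' a'') (br x' x'') a x) +
    (f (mul a'' a) (br x'' x) a' x' + g (mul a'' a) (br x'' x) a' x')
    = (f (mul a a') (br x x') a'' x'' + f (mul a' a'') (br x' x'') a x + f (mul a'' a) (br x'' x) a' x')
    + (g (mul a a') (br x x') a'' x'' + g (mul a' a'') (br x' x'') a x + g (mul a'' a) (br x'' x) a' x')"
    by (simp add: algebra_simps)
  also have "\<dots> = 0" using assms unfolding cocycle2_def by simp
  finally show "f (mul a a') (br x x') a'' x'' + g (mul a a') (br x x') a'' x'' +
    (f (mul a' a'') (br x' x'') a x + g (mul a' a'') (br x' x'') a x) +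
    (f (mul a'' a) (br x'' x) a' x' + g (mul a'' a) (br x'' x) a' x') = 0" .
qed

theorem corollary3p2:
  fixes sA :: "'K::field \<Rightarrow> 'A::ab_group_add \<Rightarrow> 'A" and mul :: "'A \<Rightarrow> 'A \<Rightarrow> 'A" and one :: 'A
    and sk :: "'K \<Rightarrow> 'k::ab_group_add \<Rightarrow> 'k" and br :: "'k \<Rightarrow> 'k \<Rightarrow> 'k"
    and sz :: "'K \<Rightarrow> 'z::ab_group_add \<Rightarrow> 'z"
    and F1 :: "'A \<Rightarrow> 'A \<Rightarrow> 'k \<Rightarrow> 'k \<Rightarrow> 'z"
    and F2 :: "'A \<Rightarrow> 'k \<Rightarrow> 'k \<Rightarrow> 'z"
    and F3 :: "'A \<Rightarrow> 'A \<Rightarrow> 'k \<Rightarrow> 'k \<Rightarrow> 'z"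
  assumes two: "(2::'K) \<noteq> 0"
    and A: "unital_comm_alg sA mul one"
    and k: "lie_alg sk br"
    and z: "vector_space sz"
    and F1_ml: "multilinear4 sA sA sk sk sz F1"
    and F1_alt: "\<And>a b x y. F1 b a x y = - F1 a b x y"
    and F1_sym: "\<And>a b x y. F1 a b y x = F1 a b x y"
    and F2_ml: "multilinear3 sA sk sk sz F2"
    and F2_alt: "\<And>c x y. F2 c y x = - F2 c x y"
    and F3_ml: "multilinear4 sA sA sk sk sz F3"
    and F3_sym: "\<And>a b x y. F3 b a x y = F3 a b x y"
    and F3_alt: "\<And>a b x y. F3 a b y x = - F3 a b x y"
  shows "cocycle2 mul br
           (\<lambda>a x b y. comp_p1 F1 a x b y + comp_p2 mul F2 a x b y + comp_p3 mul one F3 a x b y)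
         \<longleftrightarrow> cocycle2 mul br (\<lambda>a x b y. comp_p1 F1 a x b y + comp_p2 mul F2 a x b y)
           \<and> cocycle2 mul br (comp_p3 mul one F3)"
proof -
  have mcomm: "\<And>a b. mul a b = mul b a" and massoc: "\<And>a b c. mul (mul a b) c = mul a (mul b c)"
    and mone: "\<And>a. mul one a = a" using A by (auto simp: unital_comm_alg_def)
  have mone': "\<And>a. mul a one = a" using mone mcomm by metis
  have brl: "\<And>x. Vector_Spaces.linear sk sk (br x)"
    and brr: "\<And>x. Vector_Spaces.linear sk sk (\<lambda>y. br y x)"
    and brxx: "\<And>x. br x x = 0" using k by (auto simp: lie_alg_def)
  have branti: "\<And>x y. br y x = - br x y"
  proof -
    fix x y
    have "0 = br (x+y) (x+y)" using brxx by simp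
    also have "\<dots> = br x (x+y) + br y (x+y)" using lin_add[OF brr] by simp
    also have "\<dots> = br x y + br y x" using lin_add[OF brl] brxx by simp
    finally have "br x y + br y x = 0" by simp
    thus "br y x = - br x y" by (metis neg_eq_iff_add_eq_0)
  qed
  have F1n: "\<And>p q u w. F1 p q (- u) w = - F1 p q u w"
  proof -
    fix p q u w
    have "Vector_Spaces.linear sk sz (\<lambda>u. F1 p q u w)" using F1_ml by (simp add: multilinear4_def)
    from lin_neg[OF this] show "F1 p q (- u) w = - F1 p q u w" by simp
  qed
  have F2n: "\<And>p u w. F2 p (- u) w = - F2 p u w"
  proof -
    fix p u w
    have "Vector_Spaces.linear sk sz (\<lambda>u. F2 p u w)" using F2_ml by (simp add: multilinear3_def)
    from lin_neg[OF this] show "F2 p (- u) w = - F2 p u w" by simp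
  qed
  have F3n: "\<And>p q u w. F3 p q (- u) w = - F3 p q u w"
  proof -
    fix p q u w
    have "Vector_Spaces.linear sk sz (\<lambda>u. F3 p q u w)" using F3_ml by (simp add: multilinear4_def)
    from lin_neg[OF this] show "F3 p q (- u) w = - F3 p q u w" by simp
  qed
  define Z where "Z = (\<lambda>a a' a'' x x' x''.
       (F1 (mul a a') a'' (br x x') x'' + F2 (mul (mul a a') a'') (br x x') x''
          + (F3 (mul a a') a'' (br x x') x'' - F3 (mul (mul a a') a'') one (br x x') x''))
     + (F1 (mul a' a'') a (br x' x'') x + F2 (mul (mul a' a'') a) (br x' x'') x
          + (F3 (mul a' a'') a (br x' x'') x - F3 (mul (mul a' a'') a) one (br x' x'') x))
     + (F1 (mul a'' a) a' (br x'' x) x' + F2 (mul (mul a'' a) a') (br x'' x) x'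
          + (F3 (mul a'' a) a' (br x'' x) x' - F3 (mul (mul a'' a) a') one (br x'' x) x')))"
  have key: "F3 b c (br x y) z - F3 (mul b c) one (br x y) z = 0"
    if H: "\<And>a a' a'' x x' x''. Z a a' a'' x x' x'' = 0" for b c x y z
  proof -
    have r1: "br y x = - br x y" "br z y = - br y z" "br x z = - br z x" by (rule branti)+
    have r2: "mul c b = mul b c" "F1 c b = (\<lambda>u w. - F1 b c u w)"
      "F1 one (mul b c) = (\<lambda>u w. - F1 (mul b c) one u w)"
      "F3 c b = F3 b c" "F3 one (mul b c) = F3 (mul b c) one"
      by (rule mcomm, rule ext, rule ext, rule F1_alt, rule ext, rule ext, rule F1_alt,
          rule ext, rule ext, rule F3_sym, rule ext, rule ext, rule F3_sym)
    note rs = r1 r2 F1n F2n F3n mone mone' Z_def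
    let ?g1 = "F3 b c (br y z) x - F3 (mul b c) one (br y z) x"
    let ?g2 = "F3 b c (br z x) y - F3 (mul b c) one (br z x) y"
    let ?g3 = "F3 b c (br x y) z - F3 (mul b c) one (br x y) z"
    let ?h1 = "F1 b c (br y z) x" let ?h2 = "F1 b c (br z x) y" let ?h3 = "F1 b c (br x y) z"
    let ?n1 = "F1 (mul b c) one (br y z) x" let ?n2 = "F1 (mul b c) one (br z x) y"
    let ?n3 = "F1 (mul b c) one (br x y) z"
    let ?M = "F2 (mul b c) (br x y) z + F2 (mul b c) (br y z) x + F2 (mul b c) (br z x) y"
    have e1: "?g3+?g2+?h3-?h2+?n1+?M = 0" using H[of one b c x y z] by (simp add: rs algebra_simps)
    have e2: "-?g2-?g3-?h2+?h3-?n1-?M = 0" using H[of one b c x z y] by (simp add: rs algebra_simps)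
    have e3: "?g1+?g3+?h1-?h3+?n2+?M = 0" using H[of one b c y z x] by (simp add: rs algebra_simps)
    have e4: "-?g3-?g1-?h3+?h1-?n2-?M = 0" using H[of one b c y x z] by (simp add: rs algebra_simps)
    have e5: "?g2+?g1+?h2-?h1+?n3+?M = 0" using H[of one b c z x y] by (simp add: rs algebra_simps)
    have e6: "-?g1-?g2-?h1+?h2-?n3-?M = 0" using H[of one b c z y x] by (simp add: rs algebra_simps)
    have e7: "?n1+?n2-?n3+?M = 0" using H[of one one "mul b c" x y z] by (simp add: rs algebra_simps)
    have "(?g3+?g3)+(?g3+?g3) = 0" by (rule comb4[OF e1 e2 e3 e4 e5 e6 e7])
    hence "?g3+?g3 = 0" using half_zero[OF z two] by blast
    thus ?thesis using half_zero[OF z two] by blast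
  qed
  show ?thesis
  proof
    assume "cocycle2 mul br
           (\<lambda>a x b y. comp_p1 F1 a x b y + comp_p2 mul F2 a x b y + comp_p3 mul one F3 a x b y)"
    hence H: "\<And>a a' a'' x x' x''. Z a a' a'' x x' x'' = 0"
      by (simp add: cocycle2_def comp_p1_def comp_p2_def comp_p3_def Z_def)
    have C3: "cocycle2 mul br (comp_p3 mul one F3)"
      unfolding cocycle2_def comp_p3_def using key[OF H] by simp
    have "cocycle2 mul br (\<lambda>a x b y. comp_p1 F1 a x b y + comp_p2 mul F2 a x b y)"
      unfolding cocycle2_def comp_p1_def comp_p2_def
    proof (intro allI)
      fix a a' a'' x x' x''
      have "Z a a' a'' x x' x'' = 0" by (rule H)
      thus "F1 (mul a a') a'' (br x x') x'' + F2 (mul (mul a a') a'') (br x x') x'' +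
        (F1 (mul a' a'') a (br x' x'') x + F2 (mul (mul a' a'') a) (br x' x'') x) +
        (F1 (mul a'' a) a' (br x'' x) x' + F2 (mul (mul a'' a) a') (br x'' x) x') = 0"
        unfolding Z_def using key[OF H] by (simp add: algebra_simps)
    qed
    with C3 show "cocycle2 mul br (\<lambda>a x b y. comp_p1 F1 a x b y + comp_p2 mul F2 a x b y)
           \<and> cocycle2 mul br (comp_p3 mul one F3)" by blast
  next
    assume "cocycle2 mul br (\<lambda>a x b y. comp_p1 F1 a x b y + comp_p2 mul F2 a x b y)
           \<and> cocycle2 mul br (comp_p3 mul one F3)"
    thus "cocycle2 mul br
           (\<lambda>a x b y. comp_p1 F1 a x b y + comp_p2 mul F2 a x b y + comp_p3 mul one F3 a x b y)"
      using cocycle_add[of mul br "\<lambda>a x b y. comp_p1 F1 a x b y + comp_p2 mul F2 a x b y"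
          "comp_p3 mul one F3"] by simp
  qed
qed

end
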